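(* For every reachable pointed lasso automaton $X=(X_1,X_2,\overline{x},\delta_1,\delta_2,\delta_3)$, define $T(X)=(\sim_\delta,\sim)$ as in the context. Then $\sim$ is a well-defined equivalence relation on $\Sigma^{\mathrm{up}}$, $(\sim_\delta,\sim)$ is a congruence on the free Wilke algebra $(\Sigma^+,\Sigma^{\mathrm{up}})$, and whenever there is a morphism $X\to Y$ of reachable pointed lasso automata, $T(X)\subseteq T(Y)$ componentwise. (That is, $T$ is a well-defined functor from $\mathrm{Alg}_r(G_1)$ to the preorder of Wilke algebra congruences under inclusion.)
   Context: $\Sigma$ is a finite alphabet, $\Sigma^+$ the nonempty words, $\Sigma^{\ast+}=\Sigma^\ast\times\Sigma^+$ the lassos, $\Sigma^{\mathrm{up}}=\{uv^\omega\mid u\in\Sigma^\ast,v\in\Sigma^+\}$ the ultimately periodic words; $(u,v)\sim_\gamma(u',v')$ iff $uv^\omega=u'v'^\omega$. A pointed lasso automaton is $(X_1,X_2,\overline{x},\delta_1,\delta_2,\delta_3)$ with disjoint $X_1,X_2$, $\overline{x}\in X_1$, $\delta_1:X_1\times\Sigma\to X_1$, $\delta_2:X_1\times\Sigma\to X_2$, $\delta_3:X_2\times\Sigma\to X_2$; extend $\delta_1,\delta_3$ to words, $\delta_\circ(x,av)=\delta_3(\delta_2(x,a),v)$ for $x\in X_1$, $\delta(x,(u,v))=\delta_\circ(\delta_1(x,u),v)$. It is reachable if every $x\in X_1$ is $\delta_1(\overline{x},w)$ for some word and every $y\in X_2$ is $\delta(\overline{x},(u,v))$ for some lasso; morphisms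 are pairs of maps preserving the initial state and commuting with $\delta_1,\delta_2,\delta_3$; $\mathrm{Alg}_r(G_1)$ is the resulting category. A set $c\subseteq X_2$ is admissible if the accepted lasso language $\{(u,v)\mid\delta(\overline{x},(u,v))\in c\}$ is closed under $\sim_\gamma$; $\mathrm{Adm}(X_2)$ is the set of admissible sets. $\sim_\delta\subseteq\Sigma^+\times\Sigma^+$: $u\sim_\delta v$ iff $\delta_1(x,u)=\delta_1(x,v)$ and $\delta_\circ(x,u)=\delta_\circ(x,v)$ for all $x\in X_1$, and $\delta_3(y,u)=\delta_3(y,v)$ for all $y\in X_2$. $\sim$ on $\Sigma^{\mathrm{up}}$: $uv^\omega\sim u'v'^\omega$ iff for all $x\in X_1$ and $c\in\mathrm{Adm}(X_2)$, $\delta(x,(u,v))\in c\iff\delta(x,(u',v'))\in c$. The free Wilke algebra over $\Sigma$ is $(\Sigma^+,\Sigma^{\mathrm{up}})$ with concatenation on $\Sigma^+$, mixed product $u\cdot(vw^\omega)=(uv)w^\omega$ and $\omega$-power $u\mapsto u^\omega$; a congruence on it is a pair of equivalence relations on $\Sigma^+$ and $\Sigma^{\mathrm{up}}$ compatible with these three operations. *)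

theory Defs
  imports Main
begin

text \<open>Finite words are lists; infinite words are functions nat => 'a.
  A lasso is a pair (u,v) with v nonempty.\<close>

definition lasso :: "'a list \<times> 'a list \<Rightarrow> bool" where
  "lasso p \<longleftrightarrow> snd p \<noteq> []"

definition omega_of :: "'a list \<times> 'a list \<Rightarrow> (nat \<Rightarrow> 'a)" where
  "omega_of p = (\<lambda>i. if i < length (fst p) then fst p ! i
                      else snd p ! ((i - length (fst p)) mod length (snd p)))"

definition sim_gamma :: "'a list \<times> 'a list \<Rightarrow> 'a list \<times> 'a list \<Rightarrow> bool" where
  "sim_gamma p q \<longleftrightarrow> omega_of p = omega_of q"

definition nonempty_words :: "'a list set" where
  "nonempty_words = {w. w \<noteq> []}"

definition up_words :: "(nat \<Rightarrow> 'a) set" where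
  "up_words = {omega_of p | p. lasso p}"

definition mixed_prod :: "'a list \<Rightarrow> (nat \<Rightarrow> 'a) \<Rightarrow> (nat \<Rightarrow> 'a)" where
  "mixed_prod u \<alpha> = (\<lambda>i. if i < length u then u ! i else \<alpha> (i - length u))"

definition omega_pow :: "'a list \<Rightarrow> (nat \<Rightarrow> 'a)" where
  "omega_pow u = omega_of ([], u)"

definition wilke_congruence :: "('a list \<times> 'a list) set \<Rightarrow> ((nat \<Rightarrow> 'a) \<times> (nat \<Rightarrow> 'a)) set \<Rightarrow> bool" where
  "wilke_congruence Ep Eu \<longleftrightarrow>
     equiv nonempty_words Ep \<and> equiv up_words Eu \<and>
     (\<forall>u u' v v'. (u, u') \<in> Ep \<and> (v, v') \<in> Ep \<longrightarrow> (u @ v, u' @ v') \<in> Ep) \<and>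
     (\<forall>u u' \<alpha> \<alpha>'. (u, u') \<in> Ep \<and> (\<alpha>, \<alpha>') \<in> Eu \<longrightarrow> (mixed_prod u \<alpha>, mixed_prod u' \<alpha>') \<in> Eu) \<and>
     (\<forall>u u'. (u, u') \<in> Ep \<longrightarrow> (omega_pow u, omega_pow u') \<in> Eu)"

text \<open>X1 and X2 live in distinct types, hence are disjoint.\<close>
record ('x, 'y, 'a) lasso_aut =
  X1 :: "'x set"
  X2 :: "'y set"
  init :: 'x
  d1 :: "'x \<Rightarrow> 'a \<Rightarrow> 'x"
  d2 :: "'x \<Rightarrow> 'a \<Rightarrow> 'y"
  d3 :: "'y \<Rightarrow> 'a \<Rightarrow> 'y"

definition is_lasso_aut :: "('x, 'y, 'a) lasso_aut \<Rightarrow> bool" where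
  "is_lasso_aut A \<longleftrightarrow> init A \<in> X1 A \<and>
     (\<forall>x\<in>X1 A. \<forall>a. d1 A x a \<in> X1 A) \<and>
     (\<forall>x\<in>X1 A. \<forall>a. d2 A x a \<in> X2 A) \<and>
     (\<forall>y\<in>X2 A. \<forall>a. d3 A y a \<in> X2 A)"

definition d1w :: "('x, 'y, 'a) lasso_aut \<Rightarrow> 'x \<Rightarrow> 'a list \<Rightarrow> 'x" where
  "d1w A x u = foldl (d1 A) x u"

definition d3w :: "('x, 'y, 'a) lasso_aut \<Rightarrow> 'y \<Rightarrow> 'a list \<Rightarrow> 'y" where
  "d3w A y u = foldl (d3 A) y u"

text \<open>delta_circ(x, a v) = delta3(delta2(x,a), v); only used on nonempty words.\<close>
definition dcirc :: "('x, 'y, 'a) lasso_aut \<Rightarrow> 'x \<Rightarrow> 'a list \<Rightarrow> 'y" where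
  "dcirc A x w = d3w A (d2 A x (hd w)) (tl w)"

definition delta :: "('x, 'y, 'a) lasso_aut \<Rightarrow> 'x \<Rightarrow> 'a list \<times> 'a list \<Rightarrow> 'y" where
  "delta A x p = dcirc A (d1w A x (fst p)) (snd p)"

definition reachable :: "('x, 'y, 'a) lasso_aut \<Rightarrow> bool" where
  "reachable A \<longleftrightarrow> is_lasso_aut A \<and>
     (\<forall>x\<in>X1 A. \<exists>w. x = d1w A (init A) w) \<and>
     (\<forall>y\<in>X2 A. \<exists>p. lasso p \<and> y = delta A (init A) p)"

definition lasso_morphism ::
  "('x, 'y, 'a) lasso_aut \<Rightarrow> ('x2, 'y2, 'a) lasso_aut \<Rightarrow> ('x \<Rightarrow> 'x2) \<Rightarrow> ('y \<Rightarrow> 'y2) \<Rightarrow> bool" where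
  "lasso_morphism A B h1 h2 \<longleftrightarrow>
     h1 ` X1 A \<subseteq> X1 B \<and> h2 ` X2 A \<subseteq> X2 B \<and> h1 (init A) = init B \<and>
     (\<forall>x\<in>X1 A. \<forall>a. h1 (d1 A x a) = d1 B (h1 x) a) \<and>
     (\<forall>x\<in>X1 A. \<forall>a. h2 (d2 A x a) = d2 B (h1 x) a) \<and>
     (\<forall>y\<in>X2 A. \<forall>a. h2 (d3 A y a) = d3 B (h2 y) a)"

definition admissible :: "('x, 'y, 'a) lasso_aut \<Rightarrow> 'y set \<Rightarrow> bool" where
  "admissible A c \<longleftrightarrow> c \<subseteq> X2 A \<and>
     (\<forall>p q. lasso p \<and> lasso q \<and> sim_gamma p q \<longrightarrow>
        (delta A (init A) p \<in> c \<longleftrightarrow> delta A (init A) q \<in> c))"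

definition Adm :: "('x, 'y, 'a) lasso_aut \<Rightarrow> 'y set set" where
  "Adm A = {c. admissible A c}"

definition sim_delta :: "('x, 'y, 'a) lasso_aut \<Rightarrow> ('a list \<times> 'a list) set" where
  "sim_delta A = {(u, v). u \<noteq> [] \<and> v \<noteq> [] \<and>
     (\<forall>x\<in>X1 A. d1w A x u = d1w A x v \<and> dcirc A x u = dcirc A x v) \<and>
     (\<forall>y\<in>X2 A. d3w A y u = d3w A y v)}"

definition sim_lasso :: "('x, 'y, 'a) lasso_aut \<Rightarrow> 'a list \<times> 'a list \<Rightarrow> 'a list \<times> 'a list \<Rightarrow> bool" where
  "sim_lasso A p q \<longleftrightarrow>
     (\<forall>x\<in>X1 A. \<forall>c\<in>Adm A. delta A x p \<in> c \<longleftrightarrow> delta A x q \<in> c)"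

definition sim_up :: "('x, 'y, 'a) lasso_aut \<Rightarrow> ((nat \<Rightarrow> 'a) \<times> (nat \<Rightarrow> 'a)) set" where
  "sim_up A = {(omega_of p, omega_of q) | p q. lasso p \<and> lasso q \<and> sim_lasso A p q}"

definition sim_well_defined :: "('x, 'y, 'a) lasso_aut \<Rightarrow> bool" where
  "sim_well_defined A \<longleftrightarrow>
     (\<forall>p p' q q'. lasso p \<and> lasso p' \<and> lasso q \<and> lasso q' \<and>
        sim_gamma p p' \<and> sim_gamma q q' \<longrightarrow> (sim_lasso A p q \<longleftrightarrow> sim_lasso A p' q'))"

end

theory Submission
  imports Defs
begin

lemma mixed_omega: "mixed_prod u (omega_of p) = omega_of (u @ fst p, snd p)"
  unfolding mixed_prod_def omega_of_def
  by (rule ext) (auto simp: nth_append)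

lemma d1w_append: "d1w A x (u @ v) = d1w A (d1w A x u) v"
  by (simp add: d1w_def)

lemma d3w_append: "d3w A x (u @ v) = d3w A (d3w A x u) v"
  by (simp add: d3w_def)

lemma dcirc_append: "u \<noteq> [] \<Longrightarrow> dcirc A x (u @ v) = d3w A (dcirc A x u) v"
  by (cases u) (simp_all add: dcirc_def d3w_append)

lemma delta_shift: "delta A (d1w A x w) p = delta A x (w @ fst p, snd p)"
  by (simp add: delta_def d1w_append)

lemma d1w_closed: "is_lasso_aut A \<Longrightarrow> x \<in> X1 A \<Longrightarrow> d1w A x u \<in> X1 A"
  unfolding d1w_def is_lasso_aut_def
  by (induction u arbitrary: x) auto

lemma d3w_closed: "is_lasso_aut A \<Longrightarrow> y \<in> X2 A \<Longrightarrow> d3w A y u \<in> X2 A"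
  unfolding d3w_def is_lasso_aut_def
  by (induction u arbitrary: y) auto

lemma dcirc_closed: "is_lasso_aut A \<Longrightarrow> x \<in> X1 A \<Longrightarrow> dcirc A x u \<in> X2 A"
proof -
  assume a: "is_lasso_aut A" "x \<in> X1 A"
  then have "d2 A x (hd u) \<in> X2 A" by (simp add: is_lasso_aut_def)
  then show ?thesis unfolding dcirc_def using d3w_closed[OF a(1)] by blast
qed

lemma delta_closed: "is_lasso_aut A \<Longrightarrow> x \<in> X1 A \<Longrightarrow> delta A x p \<in> X2 A"
  unfolding delta_def by (intro dcirc_closed d1w_closed)

lemma h1_d1w: "lasso_morphism A B h1 h2 \<Longrightarrow> is_lasso_aut A \<Longrightarrow> x \<in> X1 A \<Longrightarrow>
   h1 (d1w A x u) = d1w B (h1 x) u"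
proof (induction u arbitrary: x)
  case Nil then show ?case by (simp add: d1w_def)
next
  case (Cons a u)
  have "d1 A x a \<in> X1 A" using Cons.prems by (simp add: is_lasso_aut_def)
  then have "h1 (d1w A (d1 A x a) u) = d1w B (h1 (d1 A x a)) u" using Cons by blast
  moreover have "h1 (d1 A x a) = d1 B (h1 x) a" using Cons.prems by (simp add: lasso_morphism_def)
  ultimately show ?case by (simp add: d1w_def)
qed

lemma h2_d3w: "lasso_morphism A B h1 h2 \<Longrightarrow> is_lasso_aut A \<Longrightarrow> y \<in> X2 A \<Longrightarrow>
   h2 (d3w A y u) = d3w B (h2 y) u"
proof (induction u arbitrary: y)
  case Nil then show ?case by (simp add: d3w_def)
next
  case (Cons a u)
  have "d3 A y a \<in> X2 A" using Cons.prems by (simp add: is_lasso_aut_def)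
  then have "h2 (d3w A (d3 A y a) u) = d3w B (h2 (d3 A y a)) u" using Cons by blast
  moreover have "h2 (d3 A y a) = d3 B (h2 y) a" using Cons.prems by (simp add: lasso_morphism_def)
  ultimately show ?case by (simp add: d3w_def)
qed

lemma h2_dcirc: "lasso_morphism A B h1 h2 \<Longrightarrow> is_lasso_aut A \<Longrightarrow> x \<in> X1 A \<Longrightarrow>
   h2 (dcirc A x u) = dcirc B (h1 x) u"
proof -
  assume m: "lasso_morphism A B h1 h2" and l: "is_lasso_aut A" and x: "x \<in> X1 A"
  have "d2 A x (hd u) \<in> X2 A" using l x by (simp add: is_lasso_aut_def)
  then have "h2 (dcirc A x u) = d3w B (h2 (d2 A x (hd u))) (tl u)"
    unfolding dcirc_def using h2_d3w[OF m l] by blast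
  also have "h2 (d2 A x (hd u)) = d2 B (h1 x) (hd u)" using m x by (simp add: lasso_morphism_def)
  finally show ?thesis by (simp add: dcirc_def)
qed

lemma h2_delta: "lasso_morphism A B h1 h2 \<Longrightarrow> is_lasso_aut A \<Longrightarrow> x \<in> X1 A \<Longrightarrow>
   h2 (delta A x p) = delta B (h1 x) p"
  unfolding delta_def by (simp add: h2_dcirc h1_d1w d1w_closed)

lemma wd:
  assumes r: "reachable A" and l: "lasso p" "lasso p'" and g: "sim_gamma p p'"
    and x: "x \<in> X1 A" and c: "c \<in> Adm A"
  shows "delta A x p \<in> c \<longleftrightarrow> delta A x p' \<in> c"
proof -
  obtain w where w: "x = d1w A (init A) w" using r x unfolding reachable_def by blast
  have g2: "sim_gamma (w @ fst p, snd p) (w @ fst p', snd p')"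
    using g unfolding sim_gamma_def by (metis mixed_omega)
  have l2: "lasso (w @ fst p, snd p)" "lasso (w @ fst p', snd p')" using l by (auto simp: lasso_def)
  have adm: "\<And>p q. lasso p \<Longrightarrow> lasso q \<Longrightarrow> sim_gamma p q \<Longrightarrow>
        (delta A (init A) p \<in> c \<longleftrightarrow> delta A (init A) q \<in> c)"
    using c unfolding Adm_def admissible_def by blast
  show ?thesis unfolding w delta_shift by (rule adm[OF l2 g2])
qed

lemma wd_lasso:
  assumes r: "reachable A" and l: "lasso p" "lasso p'" "lasso q" "lasso q'"
    and g: "sim_gamma p p'" "sim_gamma q q'"
  shows "sim_lasso A p q \<longleftrightarrow> sim_lasso A p' q'"
  using wd[OF r l(1,2) g(1)] wd[OF r l(3,4) g(2)] unfolding sim_lasso_def by simp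

theorem mainTheorem16:
  fixes X :: "('x, 'y, 'a::finite) lasso_aut"
  assumes "reachable X"
  shows "sim_well_defined X \<and> equiv up_words (sim_up X) \<and>
         wilke_congruence (sim_delta X) (sim_up X) \<and>
         (\<forall>(Y :: ('x2, 'y2, 'a) lasso_aut) h1 h2. reachable Y \<and> lasso_morphism X Y h1 h2 \<longrightarrow>
            sim_delta X \<subseteq> sim_delta Y \<and> sim_up X \<subseteq> sim_up Y)"
proof -
  have la: "is_lasso_aut X" using assms by (simp add: reachable_def)
  have WD: "sim_well_defined X" unfolding sim_well_defined_def
  proof (intro allI impI)
    fix p p' q q' :: "'a list \<times> 'a list" assume h: "lasso p \<and> lasso p' \<and> lasso q \<and> lasso q' \<and> sim_gamma p p' \<and> sim_gamma q q'"
    show "sim_lasso X p q = sim_lasso X p' q'"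
      using h wd_lasso[OF assms, of p p' q q'] by simp
  qed
  have EQ: "equiv up_words (sim_up X)"
  proof (rule equivI)
    show "sim_up X \<subseteq> up_words \<times> up_words"
    proof
      fix z assume "z \<in> sim_up X"
      then obtain p q where "z = (omega_of p, omega_of q)" "lasso p" "lasso q"
        unfolding sim_up_def by blast
      then show "z \<in> up_words \<times> up_words" unfolding up_words_def by blast
    qed
    show "refl_on up_words (sim_up X)" unfolding refl_on_def
    proof
      fix a :: "nat \<Rightarrow> 'a" assume "a \<in> up_words"
      then obtain p :: "'a list \<times> 'a list" where p: "a = omega_of p" "lasso p" unfolding up_words_def by blast
      have "sim_lasso X p p" unfolding sim_lasso_def by simp
      then show "(a, a) \<in> sim_up X" unfolding sim_up_def using p by blast
    qed
    show "sym (sim_up X)" unfolding sym_def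
    proof (intro allI impI)
      fix a b assume "(a, b) \<in> sim_up X"
      then obtain p q where pq: "a = omega_of p" "b = omega_of q" "lasso p" "lasso q" "sim_lasso X p q"
        unfolding sim_up_def by blast
      have "sim_lasso X q p" using pq(5) unfolding sim_lasso_def by simp
      then show "(b, a) \<in> sim_up X" unfolding sim_up_def using pq by blast
    qed
    show "trans (sim_up X)"
    proof (rule transI)
      fix a b d assume "(a, b) \<in> sim_up X" "(b, d) \<in> sim_up X"
      then obtain p q q' r where pq: "a = omega_of p" "b = omega_of q" "lasso p" "lasso q" "sim_lasso X p q"
        and qr: "b = omega_of q'" "d = omega_of r" "lasso q'" "lasso r" "sim_lasso X q' r"
        unfolding sim_up_def by blast
      have gg: "sim_gamma q' q" "sim_gamma r r" using pq(2) qr(1) unfolding sim_gamma_def by simp_all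
      have "sim_lasso X q r" using wd_lasso[OF assms qr(3) pq(4) qr(4) qr(4) gg] qr(5) by simp
      then have "sim_lasso X p r" using pq(5) unfolding sim_lasso_def by simp
      then show "(a, d) \<in> sim_up X" unfolding sim_up_def using pq qr by blast
    qed
  qed
  have ED: "equiv nonempty_words (sim_delta X)"
  proof (rule equivI)
    show "sim_delta X \<subseteq> nonempty_words \<times> nonempty_words"
      unfolding sim_delta_def nonempty_words_def by auto
    show "refl_on nonempty_words (sim_delta X)"
      unfolding refl_on_def sim_delta_def nonempty_words_def by auto
    show "sym (sim_delta X)"
      unfolding sym_def sim_delta_def by auto
    show "trans (sim_delta X)"
      unfolding trans_def sim_delta_def by auto
  qed
  have CAT: "(u @ v, u' @ v') \<in> sim_delta X" if "(u, u') \<in> sim_delta X" "(v, v') \<in> sim_delta X" for u u' v v'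
  proof -
    have u: "u \<noteq> []" "u' \<noteq> []" "\<forall>x\<in>X1 X. d1w X x u = d1w X x u' \<and> dcirc X x u = dcirc X x u'"
      "\<forall>y\<in>X2 X. d3w X y u = d3w X y u'" using that(1) unfolding sim_delta_def by auto
    have v: "v \<noteq> []" "v' \<noteq> []" "\<forall>x\<in>X1 X. d1w X x v = d1w X x v' \<and> dcirc X x v = dcirc X x v'"
      "\<forall>y\<in>X2 X. d3w X y v = d3w X y v'" using that(2) unfolding sim_delta_def by auto
    have "\<forall>x\<in>X1 X. d1w X x (u@v) = d1w X x (u'@v')"
      using u v d1w_closed[OF la] by (simp add: d1w_append)
    moreover have "\<forall>x\<in>X1 X. dcirc X x (u@v) = dcirc X x (u'@v')"
      using u v dcirc_closed[OF la] by (simp add: dcirc_append)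
    moreover have "\<forall>y\<in>X2 X. d3w X y (u@v) = d3w X y (u'@v')"
      using u v d3w_closed[OF la] by (simp add: d3w_append)
    ultimately show ?thesis using u v unfolding sim_delta_def by auto
  qed
  have MIX: "(mixed_prod u \<alpha>, mixed_prod u' \<alpha>') \<in> sim_up X"
    if H1: "(u, u') \<in> sim_delta X" and H2: "(\<alpha>, \<alpha>') \<in> sim_up X" for u u' \<alpha> \<alpha>'
  proof -
    have u: "\<forall>x\<in>X1 X. d1w X x u = d1w X x u'" using H1 unfolding sim_delta_def by auto
    obtain p q where pq: "\<alpha> = omega_of p" "\<alpha>' = omega_of q" "lasso p" "lasso q" "sim_lasso X p q"
      using H2 unfolding sim_up_def by blast
    have "sim_lasso X (u @ fst p, snd p) (u' @ fst q, snd q)"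
      unfolding sim_lasso_def
    proof (intro ballI)
      fix x c assume x: "x \<in> X1 X" and c: "c \<in> Adm X"
      have "delta X x (u @ fst p, snd p) = delta X (d1w X x u') p" using u x by (simp add: delta_shift[symmetric])
      moreover have "delta X x (u' @ fst q, snd q) = delta X (d1w X x u') q" by (simp add: delta_shift[symmetric])
      ultimately show "delta X x (u @ fst p, snd p) \<in> c \<longleftrightarrow> delta X x (u' @ fst q, snd q) \<in> c"
        using pq(5) c d1w_closed[OF la x] unfolding sim_lasso_def by simp
    qed
    moreover have "lasso (u @ fst p, snd p)" "lasso (u' @ fst q, snd q)" using pq by (auto simp: lasso_def)
    ultimately show ?thesis unfolding sim_up_def pq mixed_omega by blast
  qed
  have OM: "(omega_pow u, omega_pow u') \<in> sim_up X" if "(u, u') \<in> sim_delta X" for u u'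
  proof -
    have u: "u \<noteq> []" "u' \<noteq> []" "\<forall>x\<in>X1 X. dcirc X x u = dcirc X x u'"
      using that unfolding sim_delta_def by auto
    have "sim_lasso X ([], u) ([], u')" using u unfolding sim_lasso_def delta_def by (simp add: d1w_def)
    moreover have "lasso ([], u)" "lasso ([], u')" using u by (auto simp: lasso_def)
    ultimately show ?thesis unfolding sim_up_def omega_pow_def by blast
  qed
  have WC: "wilke_congruence (sim_delta X) (sim_up X)"
    unfolding wilke_congruence_def
  proof (intro conjI ED EQ allI impI)
    fix u u' v v' assume "(u, u') \<in> sim_delta X \<and> (v, v') \<in> sim_delta X"
    then show "(u @ v, u' @ v') \<in> sim_delta X" using CAT by blast
  next
    fix u u' \<alpha> \<alpha>' assume "(u, u') \<in> sim_delta X \<and> (\<alpha>, \<alpha>') \<in> sim_up X"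
    then show "(mixed_prod u \<alpha>, mixed_prod u' \<alpha>') \<in> sim_up X" using MIX by blast
  next
    fix u u' assume "(u, u') \<in> sim_delta X"
    then show "(omega_pow u, omega_pow u') \<in> sim_up X" using OM by blast
  qed
  have MOR: "sim_delta X \<subseteq> sim_delta Y \<and> sim_up X \<subseteq> sim_up Y"
    if rY: "reachable Y" and m: "lasso_morphism X Y h1 h2" for Y :: "('x2, 'y2, 'a) lasso_aut" and h1 h2
  proof
    have X1Y: "\<exists>x'\<in>X1 X. x = h1 x'" if xY: "x \<in> X1 Y" for x
    proof -
      obtain w where "x = d1w Y (init Y) w" using rY xY unfolding reachable_def by blast
      then have "x = h1 (d1w X (init X) w)" using h1_d1w[OF m la] la m
        by (simp add: is_lasso_aut_def lasso_morphism_def)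
      then show ?thesis using d1w_closed[OF la] la by (auto simp: is_lasso_aut_def)
    qed
    have X2Y: "\<exists>y'\<in>X2 X. y = h2 y'" if yY: "y \<in> X2 Y" for y
    proof -
      obtain p where "y = delta Y (init Y) p" using rY yY unfolding reachable_def by blast
      then have "y = h2 (delta X (init X) p)" using h2_delta[OF m la] la m
        by (simp add: is_lasso_aut_def lasso_morphism_def)
      moreover have "delta X (init X) p \<in> X2 X" using delta_closed[OF la] la by (simp add: is_lasso_aut_def)
      ultimately show ?thesis by blast
    qed
    show "sim_delta X \<subseteq> sim_delta Y"
    proof
      fix z assume z: "z \<in> sim_delta X"
      obtain u v where z': "z = (u, v)" by fastforce
      have u: "u \<noteq> []" "v \<noteq> []" "\<forall>x\<in>X1 X. d1w X x u = d1w X x v \<and> dcirc X x u = dcirc X x v"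
        "\<forall>y\<in>X2 X. d3w X y u = d3w X y v" using z unfolding z' sim_delta_def by auto
      have "\<forall>x\<in>X1 Y. d1w Y x u = d1w Y x v \<and> dcirc Y x u = dcirc Y x v"
      proof
        fix x assume "x \<in> X1 Y"
        then obtain x' where x': "x' \<in> X1 X" "x = h1 x'" using X1Y by blast
        show "d1w Y x u = d1w Y x v \<and> dcirc Y x u = dcirc Y x v"
          using x' u h1_d1w[OF m la x'(1)] h2_dcirc[OF m la x'(1)] by metis
      qed
      moreover have "\<forall>y\<in>X2 Y. d3w Y y u = d3w Y y v"
      proof
        fix y assume "y \<in> X2 Y"
        then obtain y' where y': "y' \<in> X2 X" "y = h2 y'" using X2Y by blast
        show "d3w Y y u = d3w Y y v"
          using y' u h2_d3w[OF m la y'(1)] by metis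
      qed
      ultimately show "z \<in> sim_delta Y" using u unfolding z' sim_delta_def by auto
    qed
    show "sim_up X \<subseteq> sim_up Y"
    proof
      fix z assume "z \<in> sim_up X"
      then obtain p q where pq: "z = (omega_of p, omega_of q)" "lasso p" "lasso q" "sim_lasso X p q"
        unfolding sim_up_def by blast
      have "sim_lasso Y p q" unfolding sim_lasso_def
      proof (intro ballI)
        fix x c assume x: "x \<in> X1 Y" and c: "c \<in> Adm Y"
        obtain x' where x': "x' \<in> X1 X" "x = h1 x'" using X1Y x by blast
        define c' where "c' = {y \<in> X2 X. h2 y \<in> c}"
        have hi: "h2 (delta X (init X) r) = delta Y (init Y) r" for r
          using h2_delta[OF m la] la m by (simp add: is_lasso_aut_def lasso_morphism_def)
        have "c' \<in> Adm X" unfolding Adm_def admissible_def c'_def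
        proof (intro CollectI conjI allI impI)
          fix r s :: "'a list \<times> 'a list" assume "lasso r \<and> lasso s \<and> sim_gamma r s"
          then have "delta Y (init Y) r \<in> c \<longleftrightarrow> delta Y (init Y) s \<in> c"
            using c unfolding Adm_def admissible_def by blast
          then show "(delta X (init X) r \<in> {y \<in> X2 X. h2 y \<in> c}) =
                     (delta X (init X) s \<in> {y \<in> X2 X. h2 y \<in> c})"
            using hi delta_closed[OF la] la by (simp add: is_lasso_aut_def)
        qed auto
        then have "delta X x' p \<in> c' \<longleftrightarrow> delta X x' q \<in> c'" using pq(4) x'(1) unfolding sim_lasso_def by blast
        then show "delta Y x p \<in> c \<longleftrightarrow> delta Y x q \<in> c"
          unfolding c'_def using x' h2_delta[OF m la x'(1)] delta_closed[OF la x'(1)] by simp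
      qed
      then show "z \<in> sim_up Y" unfolding sim_up_def using pq by blast
    qed
  qed
  show ?thesis using WD EQ WC MOR by blast
qed

end
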